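(* Let $U\in\mathcal L(\mathcal K)$ and $T,V,K\in\mathcal L(\mathcal H)$, $X\in\mathcal L(\mathcal K,\mathcal H)$, where $U$ and $V$ are unitary, $K$ is compact, $T=V+K$, $XU=TX$, and $X\mathcal K$ is dense in $\mathcal H$. Then $\sigma(T)\subset\mathbb T$.
   Context: $\sigma(T)$ denotes the spectrum of $T$ and $\mathbb T$ the unit circle. *)

theory Defs
  imports "HOL-Analysis.Analysis"
begin

class complex_vector = real_vector +
  fixes scaleC :: "complex \<Rightarrow> 'a \<Rightarrow> 'a"
  assumes scaleC_add_right: "scaleC a (x + y) = scaleC a x + scaleC a y"
    and scaleC_add_left: "scaleC (a + b) x = scaleC a x + scaleC b x"
    and scaleC_scaleC: "scaleC a (scaleC b x) = scaleC (a * b) x"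
    and scaleC_one: "scaleC 1 x = x"
    and scaleR_scaleC: "scaleR r x = scaleC (complex_of_real r) x"

class complex_inner = complex_vector + real_normed_vector +
  fixes cinner :: "'a \<Rightarrow> 'a \<Rightarrow> complex"
  assumes cinner_cnj: "cinner x y = cnj (cinner y x)"
    and cinner_add_left: "cinner (x + y) z = cinner x z + cinner y z"
    and cinner_scaleC_left: "cinner (scaleC a x) y = cnj a * cinner x y"
    and cinner_self_norm: "cinner x x = complex_of_real ((norm x)\<^sup>2)"

class chilbert_space = complex_inner + complete_space

definition bounded_clinear :: "('a::complex_inner \<Rightarrow> 'b::complex_inner) \<Rightarrow> bool" where
  "bounded_clinear f \<longleftrightarrow> bounded_linear f \<and> (\<forall>a x. f (scaleC a x) = scaleC a (f x))"

text \<open>Unitary operator: a bounded linear bijection preserving the inner product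
(equivalently U*U = UU* = I).\<close>
definition unitary_op :: "('a::complex_inner \<Rightarrow> 'a) \<Rightarrow> bool" where
  "unitary_op U \<longleftrightarrow> bounded_clinear U \<and> bij U \<and> (\<forall>x y. cinner (U x) (U y) = cinner x y)"

definition compact_op :: "('a::complex_inner \<Rightarrow> 'b::complex_inner) \<Rightarrow> bool" where
  "compact_op K \<longleftrightarrow> bounded_clinear K \<and> compact (closure (K ` ball 0 1))"

definition op_invertible :: "('a::complex_inner \<Rightarrow> 'a) \<Rightarrow> bool" where
  "op_invertible A \<longleftrightarrow> (\<exists>B. bounded_clinear B \<and> B \<circ> A = id \<and> A \<circ> B = id)"

definition op_spectrum :: "('a::complex_inner \<Rightarrow> 'a) \<Rightarrow> complex set" where
  "op_spectrum T = {z. \<not> op_invertible (\<lambda>x. T x - scaleC z x)}"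

end

theory Submission
  imports Defs
begin
lemma core:
  fixes w :: "'a::metric_space"
  assumes "closed M" "M \<noteq> {}" "w \<notin> M"
  shows "\<exists>m0\<in>M. \<forall>m\<in>M. dist w m0 \<le> 2 * dist w m"
proof -
  have d: "infdist w M > 0" using infdist_pos_not_in_closed assms by blast
  have "infdist w M < 2 * infdist w M" using d by simp
  then have "(INF a\<in>M. dist w a) < 2 * infdist w M" using infdist_notempty[OF assms(2)] by simp
  then obtain m0 where m0: "m0 \<in> M" "dist w m0 < 2 * infdist w M"
    using assms(2) by (subst (asm) cINF_less_iff) (auto intro: bdd_belowI2[where m=0])
  show ?thesis
  proof (intro bexI[OF _ m0(1)] ballI)
    fix m assume "m \<in> M"
    then have "infdist w M \<le> dist w m" by (rule infdist_le)
    then show "dist w m0 \<le> 2 * dist w m" using m0 by linarith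
  qed
qed

definition sqcmp :: "('a::real_normed_vector \<Rightarrow> 'b::real_normed_vector) \<Rightarrow> bool" where
  "sqcmp Q \<longleftrightarrow> (\<forall>z. (\<forall>n::nat. norm (z n) \<le> 1) \<longrightarrow> (\<exists>r l. strict_mono r \<and> ((\<lambda>n. Q (z (r n))) \<longlonglongrightarrow> l)))"

lemma sqcmp_bounded:
  fixes z :: "nat \<Rightarrow> 'a::real_normed_vector" and Q :: "'a \<Rightarrow> 'b::real_normed_vector"
  assumes "sqcmp Q" "bounded_linear Q" "\<And>n. norm (z n) \<le> B"
  shows "\<exists>r l. strict_mono r \<and> ((\<lambda>n. Q (z (r n))) \<longlonglongrightarrow> l)"
proof -
  define B' where "B' = max B 1"
  have B': "B' > 0" "B \<le> B'" unfolding B'_def by auto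
  define q where "q n = (1 / B') *\<^sub>R z n" for n
  have "\<forall>n. norm (q n) \<le> 1"
    using assms(3) B' by (simp add: q_def divide_simps) (meson order_trans)
  then have "\<exists>r l. strict_mono r \<and> ((\<lambda>n. Q (q (r n))) \<longlonglongrightarrow> l)"
    using assms(1) unfolding sqcmp_def by blast
  then obtain r l where r: "strict_mono r" "(\<lambda>n. Q (q (r n))) \<longlonglongrightarrow> l"
    by blast
  have "(\<lambda>n. B' *\<^sub>R Q (q (r n))) \<longlonglongrightarrow> B' *\<^sub>R l"
    using r(2) by (intro tendsto_intros)
  moreover have "B' *\<^sub>R Q (q (r n)) = Q (z (r n))" for n
    using B' by (simp add: q_def linear_simps(5)[OF assms(2)])
  ultimately show ?thesis using r(1) by auto
qed

lemma riesz_R1: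
  fixes Q :: "'a::real_normed_vector \<Rightarrow> 'a"
  assumes bl: "bounded_linear Q" and sc: "sqcmp Q" and S: "S = (\<lambda>x. x + Q x)"
  shows "\<exists>c>0. \<forall>x. \<exists>m. S m = 0 \<and> c * norm (x - m) \<le> norm (S x)"
proof (rule ccontr)
  assume neg: "\<not> ?thesis"
  have blS: "bounded_linear S" unfolding S by (intro bounded_linear_add bounded_linear_ident bl)
  define N where "N = {m. S m = 0}"
  have clN: "closed N" unfolding N_def
    by (intro closed_Collect_eq linear_continuous_on blS continuous_on_const)
  have S0: "S 0 = 0" using blS by (simp add: linear_simps)
  have "\<forall>n. \<exists>x. \<forall>mm\<in>N. norm (S x) < inverse (real (Suc n)) * norm (x - mm)"
  proof
    fix n :: nat
    have "inverse (real (Suc n)) > 0" by simp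
    then show "\<exists>x. \<forall>mm\<in>N. norm (S x) < inverse (real (Suc n)) * norm (x - mm)"
      using neg unfolding N_def by (metis mem_Collect_eq not_le)
  qed
  then obtain x where x: "\<And>n mm. mm \<in> N \<Longrightarrow> norm (S (x n)) < inverse (real (Suc n)) * norm (x n - mm)"
    by metis
  have xN: "x n \<notin> N" for n
    using x[of "x n" n] by auto
  have NN: "N \<noteq> {}" using S0 unfolding N_def by auto
  have "\<forall>n. \<exists>m0\<in>N. \<forall>mm\<in>N. dist (x n) m0 \<le> 2 * dist (x n) mm"
    using core[OF clN NN xN] by blast
  then obtain m where m: "\<And>n. m n \<in> N" "\<And>n mm. mm \<in> N \<Longrightarrow> dist (x n) (m n) \<le> 2 * dist (x n) mm"
    by metis
  define t where "t n = norm (x n - m n)" for n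
  have tpos: "t n > 0" for n using xN m(1) by (auto simp: t_def) (metis)
  define y where "y n = (1 / t n) *\<^sub>R (x n - m n)" for n
  have ny: "norm (y n) = 1" for n using tpos[of n] by (simp add: y_def t_def)
  have Sm: "S (m n) = 0" for n using m(1) by (simp add: N_def)
  have Sy: "norm (S (y n)) \<le> inverse (real (Suc n))" for n
  proof -
    have "S (y n) = (1 / t n) *\<^sub>R S (x n)"
      using Sm[of n] by (simp add: y_def linear_simps[OF blS])
    then have "norm (S (y n)) = norm (S (x n)) / t n" using tpos[of n] by simp
    also have "\<dots> \<le> inverse (real (Suc n))"
      using x[of "m n" n, OF m(1)] tpos[of n] by (simp add: t_def divide_simps)
    finally show ?thesis .
  qed
  have far: "1/2 \<le> norm (y n - mm)" if mm: "mm \<in> N" for n mm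
  proof -
    have inN: "m n + t n *\<^sub>R mm \<in> N" using mm Sm[of n] by (simp add: N_def linear_simps[OF blS])
    have "t n \<le> 2 * norm (x n - (m n + t n *\<^sub>R mm))"
      using m(2)[OF inN, of n] by (simp add: t_def dist_norm)
    moreover have "y n - mm = (1 / t n) *\<^sub>R (x n - (m n + t n *\<^sub>R mm))"
      using tpos[of n] by (simp add: y_def algebra_simps)
    ultimately show ?thesis using tpos[of n] by (simp add: divide_simps)
  qed
  obtain r l where r: "strict_mono r" "(\<lambda>n. Q (y (r n))) \<longlonglongrightarrow> l"
    using sqcmp_bounded[OF sc bl, of y 1] ny by auto
  have lim0: "(\<lambda>n. S (y (r n))) \<longlonglongrightarrow> 0"
  proof (rule Lim_null_comparison)
    show "\<forall>\<^sub>F n in sequentially. norm (S (y (r n))) \<le> inverse (real (Suc n))"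
    proof (rule always_eventually, rule allI)
      fix n
      have "inverse (real (Suc (r n))) \<le> inverse (real (Suc n))"
        using seq_suble[OF r(1), of n] by (simp add: field_simps)
      then show "norm (S (y (r n))) \<le> inverse (real (Suc n))" using Sy[of "r n"] by linarith
    qed
    show "(\<lambda>n. inverse (real (Suc n))) \<longlonglongrightarrow> 0" by (rule LIMSEQ_inverse_real_of_nat)
  qed
  have "(\<lambda>n. S (y (r n)) - Q (y (r n))) \<longlonglongrightarrow> 0 - l"
    using lim0 r(2) by (intro tendsto_intros)
  moreover have "S (y (r n)) - Q (y (r n)) = y (r n)" for n by (simp add: S)
  ultimately have ylim: "(\<lambda>n. y (r n)) \<longlonglongrightarrow> - l" by simp
  have "(\<lambda>n. S (y (r n))) \<longlonglongrightarrow> S (- l)"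
    using bounded_linear.tendsto[OF blS ylim] .
  then have "S (- l) = 0" using lim0 LIMSEQ_unique by blast
  then have lN: "- l \<in> N" by (simp add: N_def)
  obtain n0 where "\<forall>n\<ge>n0. norm (y (r n) - - l) < 1/2"
    using LIMSEQ_D[OF ylim, of "1/2"] by auto
  then have "norm (y (r n0) - - l) < 1/2" by simp
  with far[OF lN, of "r n0"] show False by linarith
qed

lemma riesz_R2:
  fixes Q :: "'a::real_normed_vector \<Rightarrow> 'a"
  assumes bl: "bounded_linear Q" and sc: "sqcmp Q" and S: "S = (\<lambda>x. x + Q x)"
  shows "closed (range S)"
proof -
  have blS: "bounded_linear S" unfolding S by (intro bounded_linear_add bounded_linear_ident bl)
  obtain c where c: "c > 0" "\<forall>x. \<exists>m. S m = 0 \<and> c * norm (x - m) \<le> norm (S x)"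
    using riesz_R1[OF bl sc S] by blast
  show ?thesis unfolding closed_sequential_limits
  proof (intro allI impI, elim conjE)
    fix u v assume u: "\<forall>n. u n \<in> range S" and lim: "u \<longlonglongrightarrow> v"
    have "\<forall>n. \<exists>y. u n = S y" using u by blast
    then obtain x where x: "\<And>n. u n = S (x n)" by metis
    have "\<forall>n. \<exists>mm. S mm = 0 \<and> c * norm (x n - mm) \<le> norm (S (x n))" using c(2) by blast
    then obtain m where m: "\<And>n. S (m n) = 0" "\<And>n. c * norm (x n - m n) \<le> norm (S (x n))"
      by metis
    define p where "p n = x n - m n" for n
    have Sp: "S (p n) = u n" for n using m(1)[of n] x[of n] by (simp add: p_def linear_simps[OF blS])
    obtain K where K: "K > 0" "\<forall>n. norm (u n) \<le> K"
      using convergent_imp_Bseq[of u] lim unfolding convergent_def Bseq_def by blast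
    have pb: "norm (p n) \<le> K / c" for n
      using m(2)[of n] K(2) x[of n] c(1) by (simp add: p_def field_simps) (smt (verit) mult.commute)
    obtain r l where r: "strict_mono r" "(\<lambda>n. Q (p (r n))) \<longlonglongrightarrow> l"
      using sqcmp_bounded[OF sc bl, of p "K / c"] pb by blast
    have ur: "(\<lambda>n. u (r n)) \<longlonglongrightarrow> v" using LIMSEQ_subseq_LIMSEQ[OF lim r(1)] by (simp add: comp_def)
    have "(\<lambda>n. u (r n) - Q (p (r n))) \<longlonglongrightarrow> v - l"
      using ur r(2) by (intro tendsto_intros)
    moreover have "u (r n) - Q (p (r n)) = p (r n)" for n using Sp[of "r n"] by (simp add: S) (metis add_diff_cancel_right')
    ultimately have plim: "(\<lambda>n. p (r n)) \<longlonglongrightarrow> v - l" by simp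
    have "(\<lambda>n. S (p (r n))) \<longlonglongrightarrow> S (v - l)"
      using bounded_linear.tendsto[OF blS plim] .
    then have "(\<lambda>n. u (r n)) \<longlonglongrightarrow> S (v - l)" using Sp by simp
    then have "v = S (v - l)" using ur LIMSEQ_unique by blast
    then show "v \<in> range S" by blast
  qed
qed

lemma riesz_R4:
  fixes Q :: "'a::real_normed_vector \<Rightarrow> 'a"
  assumes bl: "bounded_linear Q" and sc: "sqcmp Q" and S: "S = (\<lambda>x. x + Q x)" and inj: "inj S"
  shows "\<exists>c>0. \<forall>x. c * norm x \<le> norm (S x)"
proof -
  have blS: "bounded_linear S" unfolding S by (intro bounded_linear_add bounded_linear_ident bl)
  have S0: "S 0 = 0" using blS by (simp add: linear_simps)
  obtain c where c: "c > 0" "\<forall>x. \<exists>m. S m = 0 \<and> c * norm (x - m) \<le> norm (S x)"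
    using riesz_R1[OF bl sc S] by blast
  have "c * norm x \<le> norm (S x)" for x
  proof -
    obtain m where "S m = 0" "c * norm (x - m) \<le> norm (S x)" using c(2) by blast
    moreover have "m = 0" using \<open>S m = 0\<close> S0 inj by (metis injD)
    ultimately show ?thesis by simp
  qed
  then show ?thesis using c(1) by blast
qed

lemma riesz_R3:
  fixes Q :: "'a::real_normed_vector \<Rightarrow> 'a"
  assumes bl: "bounded_linear Q" and sc: "sqcmp Q" and S: "S = (\<lambda>x. x + Q x)" and su: "surj S"
  shows "inj S"
proof (rule ccontr)
  assume "\<not> inj S"
  then obtain a b where ab: "a \<noteq> b" "S a = S b" unfolding inj_def by blast
  have blS: "bounded_linear S" unfolding S by (intro bounded_linear_add bounded_linear_ident bl)
  define x1 where "x1 = a - b"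
  have x1: "x1 \<noteq> 0" "S x1 = 0" using ab by (auto simp: x1_def linear_simps[OF blS])
  define P where "P n = S ^^ n" for n
  have blP: "bounded_linear (P n)" for n
  proof (induction n)
    case 0 then show ?case by (simp add: P_def bounded_linear_ident[unfolded id_def[symmetric]])
  next
    case (Suc n)
    have "bounded_linear (\<lambda>x. S (P n x))" by (rule bounded_linear_compose[OF blS Suc])
    then show ?case by (simp add: P_def comp_def)
  qed
  have suP: "surj (P n)" for n
  proof (induction n)
    case 0 then show ?case by (simp add: P_def)
  next
    case (Suc n) then show ?case using su unfolding P_def funpow.simps(2) by (rule comp_surj)
  qed
  have PS: "P (Suc n) x = P n (S x)" for n x unfolding P_def funpow_Suc_right by simp
  have PS': "P (Suc n) x = S (P n x)" for n x by (simp add: P_def)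
  have P0: "P n 0 = 0" for n using blP[of n] by (simp add: linear_simps)
  have Pmono: "P b x = 0" if "P a x = 0" "a \<le> b" for a b x
  proof -
    have "P b x = (S ^^ (b - a)) ((S ^^ a) x)"
      using that(2) by (simp add: P_def funpow_add[symmetric, THEN fun_cong, simplified comp_def])
    then show ?thesis using that(1) P0[of "b - a"] by (simp add: P_def)
  qed
  define N where "N n = {x. P n x = 0}" for n
  have clN: "closed (N n)" for n unfolding N_def
    by (intro closed_Collect_eq linear_continuous_on blP continuous_on_const)
  have NN: "N n \<noteq> {}" for n using P0 by (auto simp: N_def)
  have "\<forall>n. \<exists>w. P n w = x1" using suP by (metis surj_def)
  then obtain w where w: "\<And>n. P n (w n) = x1" by metis
  have wN: "w n \<notin> N n" for n using w x1 by (simp add: N_def)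
  have wS: "P (Suc n) (w n) = 0" for n using w x1 PS' by simp
  have "\<forall>n. \<exists>m0\<in>N n. \<forall>mm\<in>N n. dist (w n) m0 \<le> 2 * dist (w n) mm"
    using core[OF clN NN wN] by blast
  then obtain m where m: "\<And>n. m n \<in> N n" "\<And>n mm. mm \<in> N n \<Longrightarrow> dist (w n) (m n) \<le> 2 * dist (w n) mm"
    by metis
  define t where "t n = norm (w n - m n)" for n
  have tpos: "t n > 0" for n using wN m(1) by (auto simp: t_def) (metis)
  define y where "y n = (1 / t n) *\<^sub>R (w n - m n)" for n
  have ny: "norm (y n) = 1" for n using tpos[of n] by (simp add: y_def t_def)
  have Py: "P (Suc n) (y n) = 0" for n
  proof -
    have "P (Suc n) (m n) = 0" using m(1)[of n] PS'[of n] blS by (simp add: N_def linear_simps)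
    then show ?thesis using wS[of n] by (simp add: y_def linear_simps[OF blP])
  qed
  have far: "1/2 \<le> norm (y n - mm)" if mm: "mm \<in> N n" for n mm
  proof -
    have inN: "m n + t n *\<^sub>R mm \<in> N n" using mm m(1)[of n]
      by (simp add: N_def linear_simps[OF blP])
    have "t n \<le> 2 * norm (w n - (m n + t n *\<^sub>R mm))"
      using m(2)[OF inN] by (simp add: t_def dist_norm)
    moreover have "y n - mm = (1 / t n) *\<^sub>R (w n - (m n + t n *\<^sub>R mm))"
      using tpos[of n] by (simp add: y_def algebra_simps)
    ultimately show ?thesis using tpos[of n] by (simp add: divide_simps)
  qed
  have sep: "1/2 \<le> norm (Q (y n) - Q (y k))" if kn: "k < n" for k n
  proof -
    define z where "z = S (y n) - S (y k) + y k"
    have "P n (S (y n)) = 0" using Py[of n] PS by simp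
    moreover have "P n (S (y k)) = 0" using Pmono[OF Py[of k], of "Suc n"] kn PS by simp
    moreover have "P n (y k) = 0" using Pmono[OF Py[of k], of n] kn by simp
    ultimately have "z \<in> N n" by (simp add: z_def N_def linear_simps[OF blP])
    then have "1/2 \<le> norm (y n - z)" by (rule far)
    moreover have "Q (y n) - Q (y k) = - (y n - z)" by (simp add: z_def S algebra_simps)
    ultimately show ?thesis by (simp add: norm_minus_commute)
  qed
  obtain r l where r: "strict_mono r" "(\<lambda>n. Q (y (r n))) \<longlonglongrightarrow> l"
    using sqcmp_bounded[OF sc bl, of y 1] ny by auto
  obtain n0 where n0: "\<forall>n\<ge>n0. norm (Q (y (r n)) - l) < 1/4"
    using LIMSEQ_D[OF r(2), of "1/4"] by auto
  have lt: "r n0 < r (Suc n0)" using r(1) by (simp add: strict_mono_def)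
  have "norm (Q (y (r (Suc n0))) - Q (y (r n0))) \<le> norm (Q (y (r (Suc n0))) - l) + norm (Q (y (r n0)) - l)"
    using norm_triangle_ineq4[of "Q (y (r (Suc n0))) - l" "Q (y (r n0)) - l"] by simp
  also have "\<dots> < 1/2" using n0[rule_format, of n0] n0[rule_format, of "Suc n0"] by simp
  finally show False using sep[OF lt] by simp
qed

lemma norm_scaleC: "norm (scaleC a (x::'a::complex_inner)) = cmod a * norm x"
proof -
  have 1: "cinner x (scaleC a x) = a * cinner x x"
    by (subst cinner_cnj) (simp add: cinner_scaleC_left cinner_cnj[symmetric])
  have "complex_of_real ((norm (scaleC a x))\<^sup>2) = cinner (scaleC a x) (scaleC a x)"
    by (rule cinner_self_norm[symmetric])
  also have "\<dots> = (cnj a * a) * cinner x x" by (simp add: cinner_scaleC_left 1)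
  also have "cnj a * a = complex_of_real ((cmod a)\<^sup>2)" by (simp add: complex_norm_square[symmetric] mult.commute)
  also have "cinner x x = complex_of_real ((norm x)\<^sup>2)" by (rule cinner_self_norm)
  also have "complex_of_real ((cmod a)\<^sup>2) * complex_of_real ((norm x)\<^sup>2) = complex_of_real ((cmod a * norm x)\<^sup>2)"
    by (simp only: of_real_mult[symmetric] power_mult_distrib)
  finally have "(norm (scaleC a x))\<^sup>2 = (cmod a * norm x)\<^sup>2"
    by (simp only: of_real_eq_iff)
  then show ?thesis by (simp add: power2_eq_iff_nonneg)
qed

lemma scaleC_zero_right: "scaleC a (0::'a::complex_vector) = 0"
  using scaleC_add_right[of a "0::'a" 0] by simp

lemma scaleC_diff_right: "scaleC a (x - y) = scaleC a x - scaleC a (y::'a::complex_vector)"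
  using scaleC_add_right[of a "x - y" y] by (simp add: algebra_simps)

lemma bounded_clinear_scaleC: "bounded_clinear (\<lambda>x::'a::complex_inner. scaleC z x)"
  unfolding bounded_clinear_def
proof
  show "bounded_linear (scaleC z :: 'a \<Rightarrow> 'a)"
  proof (rule bounded_linear_intro)
    show "scaleC z (x + y) = scaleC z x + scaleC z y" for x y :: 'a by (rule scaleC_add_right)
    show "scaleC z (r *\<^sub>R x) = r *\<^sub>R scaleC z x" for r and x :: 'a
      by (simp add: scaleR_scaleC scaleC_scaleC mult.commute)
    show "norm (scaleC z x) \<le> norm x * cmod z" for x :: 'a by (simp add: norm_scaleC)
  qed
  show "\<forall>a x. scaleC z (scaleC a x) = scaleC a (scaleC z (x::'a))"
    by (simp add: scaleC_scaleC mult.commute)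
qed

lemma bounded_clinear_shift:
  assumes "bounded_clinear T"
  shows "bounded_clinear (\<lambda>x::'a::complex_inner. T x - scaleC z x)"
proof -
  have bl: "bounded_linear T" using assms by (simp add: bounded_clinear_def)
  have "bounded_linear (scaleC z :: 'a \<Rightarrow> 'a)" using bounded_clinear_scaleC[of z, where 'a='a]
    unfolding bounded_clinear_def by blast
  then have "bounded_linear (\<lambda>x::'a. T x - scaleC z x)" by (intro bounded_linear_sub bl)
  moreover have "T (scaleC a x) - scaleC z (scaleC a x) = scaleC a (T x - scaleC z x)" for a x
    using assms by (simp add: bounded_clinear_def scaleC_diff_right scaleC_scaleC mult.commute)
  ultimately show ?thesis by (simp add: bounded_clinear_def)
qed

lemma invertible_G:
  fixes A :: "'a::complex_inner \<Rightarrow> 'a"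
  assumes bc: "bounded_clinear A" and bj: "bij A" and c: "c > 0" and bb: "\<And>x. c * norm x \<le> norm (A x)"
  shows "op_invertible A"
proof -
  have bl: "bounded_linear A" and cl: "\<And>a x. A (scaleC a x) = scaleC a (A x)"
    using bc by (auto simp: bounded_clinear_def)
  define B where "B = inv A"
  have AB: "A (B y) = y" for y using bj by (simp add: B_def bij_is_surj surj_f_inv_f)
  have BA: "B (A x) = x" for x using bj by (simp add: B_def bij_is_inj inv_f_f)
  have inj: "inj A" using bj by (rule bij_is_inj)
  have add: "B (x + y) = B x + B y" for x y
    by (rule injD[OF inj]) (simp add: AB linear_simps[OF bl])
  have sc: "B (r *\<^sub>R x) = r *\<^sub>R B x" for r x
    by (rule injD[OF inj]) (simp add: AB linear_simps[OF bl])
  have scC: "B (scaleC a x) = scaleC a (B x)" for a x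
    by (rule injD[OF inj]) (simp add: AB cl)
  have nb: "norm (B y) \<le> norm y * (1 / c)" for y
    using bb[of "B y"] c by (simp add: AB field_simps)
  have "bounded_linear B" by (rule bounded_linear_intro[OF add sc nb])
  then have "bounded_clinear B" using scC by (simp add: bounded_clinear_def)
  moreover have "B \<circ> A = id" "A \<circ> B = id" by (auto simp: AB BA)
  ultimately show ?thesis unfolding op_invertible_def by blast
qed

lemma unitary_facts:
  fixes W :: "'a::complex_inner \<Rightarrow> 'a"
  assumes "unitary_op W"
  shows "bounded_linear W" "bij W" "\<And>x. norm (W x) = norm x" "\<And>a b. norm (W a - W b) = norm (a - b)"
    "bounded_clinear W"
proof -
  show bl: "bounded_linear W" and "bij W" "bounded_clinear W"
    using assms by (auto simp: unitary_op_def bounded_clinear_def)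
  have ip: "cinner (W x) (W y) = cinner x y" for x y using assms by (simp add: unitary_op_def)
  show nW: "norm (W x) = norm x" for x
  proof -
    have "complex_of_real ((norm (W x))\<^sup>2) = complex_of_real ((norm x)\<^sup>2)"
      using ip[of x x] by (simp only: cinner_self_norm)
    then have "(norm (W x))\<^sup>2 = (norm x)\<^sup>2" by (simp only: of_real_eq_iff)
    then show ?thesis by (simp add: power2_eq_iff_nonneg)
  qed
  show "norm (W a - W b) = norm (a - b)" for a b
    using nW[of "a - b"] by (simp add: linear_simps[OF bl])
qed

lemma unitary_shift:
  fixes W :: "'a::chilbert_space \<Rightarrow> 'a"
  assumes u: "unitary_op W" and z: "cmod z \<noteq> 1"
  shows "bij (\<lambda>x. W x - scaleC z x)" and "\<exists>c>0. \<forall>x. c * norm x \<le> norm (W x - scaleC z x)"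
proof -
  note uf = unitary_facts[OF u]
  define F where "F = (\<lambda>x. W x - scaleC z x)"
  have blF: "bounded_linear F" using bounded_clinear_shift[OF uf(5), of z]
    by (simp add: F_def bounded_clinear_def)
  define c where "c = \<bar>1 - cmod z\<bar>"
  have cpos: "c > 0" using z by (simp add: c_def)
  have bound: "c * norm x \<le> norm (F x)" for x
  proof -
    have "\<bar>norm (W x) - norm (scaleC z x)\<bar> \<le> norm (W x - scaleC z x)" by (rule norm_triangle_ineq3)
    moreover have "\<bar>norm (W x) - norm (scaleC z x)\<bar> = c * norm x"
    proof -
      have "norm x - cmod z * norm x = (1 - cmod z) * norm x" by (simp add: algebra_simps)
      then show ?thesis by (simp add: uf(3) norm_scaleC c_def abs_mult)
    qed
    ultimately show ?thesis by (simp add: F_def)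
  qed
  then show "\<exists>c>0. \<forall>x. c * norm x \<le> norm (W x - scaleC z x)" using cpos by (auto simp: F_def)
  have inj: "inj F"
  proof (rule injI)
    fix a b assume "F a = F b"
    then have "F (a - b) = 0" by (simp add: linear_simps[OF blF])
    then have "c * norm (a - b) \<le> 0" using bound[of "a - b"] by simp
    then show "a = b" using cpos by (simp add: mult_le_0_iff)
  qed
  have surj: "surj F"
  proof -
    have "\<exists>x. F x = y" for y
    proof (cases "cmod z > 1")
      case True
      then have z0: "z \<noteq> 0" by auto
      define f where "f x = scaleC (inverse z) (W x - y)" for x
      have "dist (f a) (f b) \<le> inverse (cmod z) * dist a b" for a b
      proof -
        have "f a - f b = scaleC (inverse z) (W a - W b)" by (simp add: f_def scaleC_diff_right[symmetric])
        then show ?thesis by (simp add: dist_norm norm_scaleC uf(4) norm_inverse)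
      qed
      moreover have "inverse (cmod z) < 1" using True by (simp add: inverse_less_1_iff)
      ultimately obtain x where x: "f x = x" using banach_fix_type[of "inverse (cmod z)" f] by auto
      have "scaleC z (f x) = W x - y" using z0 by (simp add: f_def scaleC_scaleC scaleC_one)
      then have "W x - scaleC z x = y" using x by (simp add: algebra_simps)
      then show ?thesis by (auto simp: F_def)
    next
      case False
      then have zl: "cmod z < 1" using z by simp
      define f where "f x = inv W (y + scaleC z x)" for x
      have WiW: "W (inv W v) = v" for v using uf(2) by (simp add: bij_is_surj surj_f_inv_f)
      have "dist (f a) (f b) \<le> cmod z * dist a b" for a b
      proof -
        have "dist (f a) (f b) = norm (W (f a) - W (f b))" by (simp add: dist_norm uf(4))
        also have "\<dots> = norm (scaleC z (a - b))" by (simp add: f_def WiW scaleC_diff_right)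
        finally show ?thesis by (simp add: norm_scaleC dist_norm)
      qed
      then obtain x where x: "f x = x" using banach_fix_type[of "cmod z" f] zl by auto
      have "W x = y + scaleC z x" using arg_cong[OF x, of W] by (simp add: f_def WiW)
      then have "F x = y" by (simp add: F_def)
      then show ?thesis by blast
    qed
    then show ?thesis by (metis surj_def)
  qed
  show "bij (\<lambda>x. W x - scaleC z x)" using inj surj unfolding F_def by (simp add: bij_def)
qed

lemma sqcmp_compact:
  fixes K :: "'a::complex_inner \<Rightarrow> 'b::complex_inner" and R :: "'b \<Rightarrow> 'c::real_normed_vector"
  assumes K: "compact_op K" and R: "bounded_linear R"
  shows "sqcmp (\<lambda>x. R (K x))"
  unfolding sqcmp_def
proof (intro allI impI)
  fix z :: "nat \<Rightarrow> 'a" assume zb: "\<forall>n. norm (z n) \<le> 1"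
  have blK: "bounded_linear K" and cK: "compact (closure (K ` ball 0 1))"
    using K by (auto simp: compact_op_def bounded_clinear_def)
  define q where "q n = (1/2::real) *\<^sub>R z n" for n
  have "q n \<in> ball 0 1" for n using zb[rule_format, of n] by (simp add: q_def)
  then have "\<forall>n. K (q n) \<in> closure (K ` ball 0 1)" using closure_subset by blast
  moreover note compact_imp_seq_compact[OF cK, unfolded seq_compact_def]
  ultimately have "\<exists>l\<in>closure (K ` ball 0 1). \<exists>r. strict_mono r \<and> ((\<lambda>n. K (q n)) \<circ> r) \<longlonglongrightarrow> l"
    by (metis (no_types, lifting))
  then obtain l r where r: "strict_mono r" "((\<lambda>n. K (q n)) \<circ> r) \<longlonglongrightarrow> l"
    by blast
  have "(\<lambda>n. R ((2::real) *\<^sub>R K (q (r n)))) \<longlonglongrightarrow> R (2 *\<^sub>R l)"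
    using r(2) by (intro bounded_linear.tendsto[OF R] tendsto_intros) (simp add: comp_def)
  moreover have "(2::real) *\<^sub>R K (q (r n)) = K (z (r n))" for n
    by (simp add: q_def linear_simps[OF blK])
  ultimately show "\<exists>r l. strict_mono r \<and> ((\<lambda>n. R (K (z (r n)))) \<longlonglongrightarrow> l)" using r(1) by auto
qed

theorem lemma7p1:
  fixes U :: "'k::chilbert_space \<Rightarrow> 'k"
    and T V K :: "'h::chilbert_space \<Rightarrow> 'h"
    and X :: "'k \<Rightarrow> 'h"
  assumes "unitary_op U" and "unitary_op V"
    and "compact_op K"
    and "bounded_clinear T"
    and "bounded_clinear X"
    and "T = (\<lambda>x. V x + K x)"
    and "X \<circ> U = T \<circ> X"
    and "closure (range X) = UNIV"
  shows "op_spectrum T \<subseteq> sphere 0 1"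
proof
  fix z assume zs: "z \<in> op_spectrum T"
  show "z \<in> sphere 0 1"
  proof (rule ccontr)
    assume "z \<notin> sphere 0 1"
    then have zn: "cmod z \<noteq> 1" by simp
    define A where "A = (\<lambda>x. T x - scaleC z x)"
    have nA: "\<not> op_invertible A" using zs by (simp add: op_spectrum_def A_def)
    define W where "W = (\<lambda>x. V x - scaleC z x)"
    have bijW: "bij W" using unitary_shift(1)[OF assms(2) zn] by (simp add: W_def)
    obtain c1 where c1: "c1 > 0" "\<And>x. c1 * norm x \<le> norm (W x)"
      using unitary_shift(2)[OF assms(2) zn] by (auto simp: W_def)
    have bcW: "bounded_clinear W" unfolding W_def
      by (rule bounded_clinear_shift[OF unitary_facts(5)[OF assms(2)]])
    have "op_invertible W" by (rule invertible_G[OF bcW bijW c1])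
    then obtain R where R: "bounded_clinear R" "R \<circ> W = id" "W \<circ> R = id"
      unfolding op_invertible_def by blast
    have RW: "R (W x) = x" for x using fun_cong[OF R(2), of x] by simp
    have WR: "W (R y) = y" for y using fun_cong[OF R(3), of y] by simp
    have blR: "bounded_linear R" using R(1) by (simp add: bounded_clinear_def)
    have blK: "bounded_linear K" using assms(3) by (simp add: compact_op_def bounded_clinear_def)
    have blW: "bounded_linear W" using bcW by (simp add: bounded_clinear_def)
    have AWK: "A x = W x + K x" for x by (simp add: A_def W_def assms(6) algebra_simps)
    define Qf where "Qf = (\<lambda>x. R (K x))"
    define S where "S = (\<lambda>x. x + Qf x)"
    have SA: "R (A x) = S x" for x by (simp add: AWK S_def Qf_def linear_simps[OF blR] RW)
    have sc: "sqcmp Qf" unfolding Qf_def by (rule sqcmp_compact[OF assms(3) blR])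
    have blQ: "bounded_linear Qf" unfolding Qf_def by (rule bounded_linear_compose[OF blR blK])
    have blX: "bounded_linear X" and clX: "\<And>a x. X (scaleC a x) = scaleC a (X x)"
      using assms(5) by (auto simp: bounded_clinear_def)
    have XA: "range X \<subseteq> range A"
    proof
      fix y assume "y \<in> range X"
      then obtain k' where k': "y = X k'" by blast
      have "surj (\<lambda>k. U k - scaleC z k)" using unitary_shift(1)[OF assms(1) zn] by (rule bij_is_surj)
      from surjD[OF this, of k'] obtain k where k0: "k' = U k - scaleC z k" by blast
      then have k: "U k - scaleC z k = k'" by simp
      have TX: "T (X k) = X (U k)" using fun_cong[OF assms(7), of k] by simp
      have "A (X k) = X (U k - scaleC z k)" by (simp add: A_def TX linear_simps[OF blX] clX)
      then have "y = A (X k)" using k k' by simp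
      then show "y \<in> range A" by blast
    qed
    have "surj R" by (rule surjI[of R W, OF RW])
    then have "UNIV = R ` UNIV" by simp
    also have "\<dots> = R ` closure (range X)" using assms(8) by simp
    also have "\<dots> \<subseteq> closure (range S)"
    proof (rule image_closure_subset)
      show "continuous_on (closure (range X)) R" by (rule linear_continuous_on[OF blR])
      show "closed (closure (range S))" by simp
      show "R ` range X \<subseteq> closure (range S)"
      proof -
        have "R ` range X \<subseteq> R ` range A" by (rule image_mono[OF XA])
        also have "R ` range A = range S" using SA by (auto simp: image_iff)
        finally show ?thesis using closure_subset by blast
      qed
    qed
    finally have dense: "closure (range S) = UNIV" by blast
    have "closed (range S)" by (rule riesz_R2[OF blQ sc S_def])
    then have suS: "surj S" using dense by (simp add: closure_closed)
    have injS: "inj S" by (rule riesz_R3[OF blQ sc S_def suS])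
    obtain c2 where c2: "c2 > 0" "\<And>x. c2 * norm x \<le> norm (S x)"
      using riesz_R4[OF blQ sc S_def injS] by blast
    have AWS: "A x = W (S x)" for x using WR[of "A x"] SA[of x] by simp
    have bijA: "bij A"
    proof -
      have "bij S" using injS suS by (simp add: bij_def)
      then have "bij (W \<circ> S)" using bijW by (rule bij_comp)
      moreover have "W \<circ> S = A" using AWS by (auto simp: comp_def)
      ultimately show ?thesis by simp
    qed
    have bound: "(c1 * c2) * norm x \<le> norm (A x)" for x
    proof -
      have "(c1 * c2) * norm x = c1 * (c2 * norm x)" by simp
      also have "\<dots> \<le> c1 * norm (S x)" using c1(1) c2(2)[of x] by (simp add: mult_left_mono)
      also have "\<dots> \<le> norm (W (S x))" by (rule c1(2))
      finally show ?thesis by (simp add: AWS)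
    qed
    have bcA: "bounded_clinear A" unfolding A_def by (rule bounded_clinear_shift[OF assms(4)])
    have "op_invertible A" by (rule invertible_G[OF bcA bijA _ bound]) (use c1 c2 in simp)
    with nA show False by simp
  qed
qed

end
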